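(* Let $Z=\{P_1,\dots,P_r\}\subset\mathbb{P}^2$ be a finite set of points and let $m>n$ be positive integers. Put $\beta=\alpha(I(mZ))$, $\gamma=\alpha(I(nZ))$ and $\alpha=\beta-\gamma$. Let $C$ be an effective divisor of degree $\beta$ with $\operatorname{ord}_{P_i}C\ge m$ for all $i$ (i.e. $C\in I(mZ)_\beta$), and suppose $C=C_1+C_2$ is a sum of two nonzero effective divisors. For $j=1,2$ let $\beta_j=\deg(C_j)$, $m_i^{(j)}=\operatorname{ord}_{P_i}C_j$, $\mathbf{m}^{(j)}=(m_1^{(j)},\dots,m_r^{(j)})$, $n_i^{(j)}=\max\{m_i^{(j)}-(m-n),0\}$ and $\mathbf{n}^{(j)}=(n_1^{(j)},\dots,n_r^{(j)})$. Then for $j=1,2$: (i) $\beta_j=\alpha(I(\mathbf{m}^{(j)}Z))$; (ii) $\alpha(I(\mathbf{m}^{(j)}Z))-\alpha(I(\mathbf{n}^{(j)}Z))\le\alpha$.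
   Context: Work over an algebraically closed field $\mathbb{K}$ of characteristic zero, $R=\mathbb{K}[x_0,x_1,x_2]$, $\mathbb{P}^2=\operatorname{Proj}R$. For a point $P$, $I(P)\subset R$ is its homogeneous maximal ideal. For $Z=\{P_1,\dots,P_r\}$ and a vector $\mathbf{m}=(m_1,\dots,m_r)$ of non-negative integers, $I(\mathbf{m}Z)=I(P_1)^{m_1}\cap\dots\cap I(P_r)^{m_r}$ (with $I(P)^0=R$); for an integer $m$, $I(mZ)=I(\mathbf{m}Z)$ with $\mathbf{m}=(m,\dots,m)$, which is the $m$-th symbolic power of $I(Z)$. For a homogeneous ideal $J=\bigoplus_n J_n$, the initial degree is $\alpha(J)=\min\{n: J_n\ne0\}$ (so $\alpha(R)=0$). A divisor "in $J_n$" means a plane curve (effective divisor) defined by a nonzero element of $J_n$; $\operatorname{ord}_P$ denotes the multiplicity of a divisor at $P$. *)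

theory Defs
  imports "HOL-Library.Poly_Mapping" "HOL-Library.Numeral_Type"
          "HOL-Computational_Algebra.Polynomial"
begin

text \<open>The polynomial ring R = K[x0,x1,x2]: exponent vectors are finitely supported
  maps from the 3-element type 3 to nat; polynomials are finitely supported maps
  from exponent vectors to coefficients (convolution product).\<close>

type_synonym mono3 = "3 \<Rightarrow>\<^sub>0 nat"
type_synonym 'k poly3 = "mono3 \<Rightarrow>\<^sub>0 'k"

definition mdeg :: "mono3 \<Rightarrow> nat" where
  "mdeg a = (\<Sum>i\<in>UNIV. Poly_Mapping.lookup a i)"

definition homogeneous :: "nat \<Rightarrow> 'k::zero poly3 \<Rightarrow> bool" where
  "homogeneous d f \<longleftrightarrow> (\<forall>a\<in>Poly_Mapping.keys f. mdeg a = d)"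

definition hcomp :: "nat \<Rightarrow> 'k::zero poly3 \<Rightarrow> 'k poly3" where
  "hcomp d f = Abs_poly_mapping (\<lambda>a. if mdeg a = d then Poly_Mapping.lookup f a else 0)"

definition eval3 :: "'k::comm_ring_1 poly3 \<Rightarrow> (3 \<Rightarrow> 'k) \<Rightarrow> 'k" where
  "eval3 f x = (\<Sum>a\<in>Poly_Mapping.keys f. Poly_Mapping.lookup f a * (\<Prod>i\<in>UNIV. x i ^ Poly_Mapping.lookup a i))"

text \<open>Homogeneous maximal ideal I(P) of a point P (given by a nonzero representative):
  polynomials all of whose homogeneous components vanish at P.\<close>
definition max_ideal :: "(3 \<Rightarrow> 'k::comm_ring_1) \<Rightarrow> 'k poly3 set" where
  "max_ideal P = {f. \<forall>d. eval3 (hcomp d f) P = 0}"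

text \<open>The power I(P)^m: the ideal generated by products of m elements of I(P)
  (I(P)^0 = R).\<close>
inductive_set ideal_pow :: "(3 \<Rightarrow> 'k::comm_ring_1) \<Rightarrow> nat \<Rightarrow> 'k poly3 set"
  for P :: "3 \<Rightarrow> 'k" and m :: nat where
  zero: "0 \<in> ideal_pow P m"
| add: "f \<in> ideal_pow P m \<Longrightarrow> g \<in> ideal_pow P m \<Longrightarrow> f + g \<in> ideal_pow P m"
| gen: "(\<forall>i<m. q i \<in> max_ideal P) \<Longrightarrow> h * (\<Prod>i<m. q i) \<in> ideal_pow P m"

definition fat_ideal :: "(3 \<Rightarrow> 'k::comm_ring_1) set \<Rightarrow> ((3 \<Rightarrow> 'k) \<Rightarrow> nat) \<Rightarrow> 'k poly3 set" where
  "fat_ideal Z mv = {f. \<forall>P\<in>Z. f \<in> ideal_pow P (mv P)}"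

definition init_deg :: "'k::zero poly3 set \<Rightarrow> nat" where
  "init_deg J = (LEAST d. \<exists>f\<in>J. f \<noteq> 0 \<and> homogeneous d f)"

definition ord_at :: "(3 \<Rightarrow> 'k::comm_ring_1) \<Rightarrow> 'k poly3 \<Rightarrow> nat" where
  "ord_at P f = (GREATEST k. f \<in> ideal_pow P k)"

definition alg_closed_field :: "'k::field itself \<Rightarrow> bool" where
  "alg_closed_field _ \<longleftrightarrow> (\<forall>p::'k poly. Polynomial.degree p \<ge> 1 \<longrightarrow> (\<exists>x. poly p x = 0))"

end

theory Submission
  imports Defs
begin

definition rhom :: "('a::comm_ring_1 \<Rightarrow> 'b::comm_ring_1) \<Rightarrow> bool" where
  "rhom \<phi> \<longleftrightarrow> \<phi> 1 = 1 \<and> (\<forall>a b. \<phi> (a + b) = \<phi> a + \<phi> b) \<and> (\<forall>a b. \<phi> (a * b) = \<phi> a * \<phi> b)"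

lemma rhom_1: "rhom \<phi> \<Longrightarrow> \<phi> 1 = 1" by (simp add: rhom_def)
lemma rhom_add: "rhom \<phi> \<Longrightarrow> \<phi> (a + b) = \<phi> a + \<phi> b" by (simp add: rhom_def)
lemma rhom_mult: "rhom \<phi> \<Longrightarrow> \<phi> (a * b) = \<phi> a * \<phi> b" by (simp add: rhom_def)
lemma rhom_0: "rhom \<phi> \<Longrightarrow> \<phi> 0 = 0"
  using rhom_add[of \<phi> 0 0] by simp
lemma rhom_uminus: "rhom \<phi> \<Longrightarrow> \<phi> (- a) = - \<phi> a"
  using rhom_add[of \<phi> a "-a"] rhom_0[of \<phi>] by (metis add.right_inverse neg_eq_iff_add_eq_0)
lemma rhom_diff: "rhom \<phi> \<Longrightarrow> \<phi> (a - b) = \<phi> a - \<phi> b"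
  using rhom_add[of \<phi> a "-b"] rhom_uminus[of \<phi> b] by simp
lemma rhom_sum: "rhom \<phi> \<Longrightarrow> \<phi> (sum f A) = sum (\<lambda>x. \<phi> (f x)) A"
  by (induction A rule: infinite_finite_induct) (auto simp: rhom_0 rhom_add)
lemma rhom_prod: "rhom \<phi> \<Longrightarrow> \<phi> (prod f A) = prod (\<lambda>x. \<phi> (f x)) A"
  by (induction A rule: infinite_finite_induct) (auto simp: rhom_1 rhom_mult)
lemma rhom_power: "rhom \<phi> \<Longrightarrow> \<phi> (a ^ n) = \<phi> a ^ n"
  by (induction n) (auto simp: rhom_1 rhom_mult)
lemma rhom_comp: "rhom \<phi> \<Longrightarrow> rhom \<psi> \<Longrightarrow> rhom (\<lambda>x. \<psi> (\<phi> x))"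
  by (simp add: rhom_def)
lemma rhom_id: "rhom (\<lambda>x. x)" by (simp add: rhom_def)

definition mon :: "(3 \<Rightarrow> 'b::comm_ring_1) \<Rightarrow> mono3 \<Rightarrow> 'b" where
  "mon x a = (\<Prod>i\<in>UNIV. x i ^ Poly_Mapping.lookup a i)"

definition evalc :: "('a::comm_ring_1 \<Rightarrow> 'b::comm_ring_1) \<Rightarrow> 'a poly3 \<Rightarrow> (3 \<Rightarrow> 'b) \<Rightarrow> 'b" where
  "evalc h f x = (\<Sum>a\<in>Poly_Mapping.keys f. h (Poly_Mapping.lookup f a) * mon x a)"

lemma eval3_evalc: "eval3 f x = evalc (\<lambda>c. c) f x"
  by (simp add: eval3_def evalc_def mon_def)

lemma mon_add: "mon x (a + b) = mon x a * mon x b"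
  by (simp add: mon_def lookup_add power_add prod.distrib)

lemma mon_0: "mon x 0 = 1" by (simp add: mon_def)

lemma evalc_superset:
  assumes "rhom h" "finite S" "Poly_Mapping.keys f \<subseteq> S"
  shows "evalc h f x = (\<Sum>a\<in>S. h (Poly_Mapping.lookup f a) * mon x a)"
  unfolding evalc_def
  by (rule sum.mono_neutral_left) (use assms in \<open>auto simp: rhom_0 in_keys_iff\<close>)

lemma evalc_add:
  assumes "rhom h"
  shows "evalc h (f + g) x = evalc h f x + evalc h g x"
proof -
  let ?S = "Poly_Mapping.keys f \<union> Poly_Mapping.keys g"
  have "evalc h (f + g) x = (\<Sum>a\<in>?S. h (Poly_Mapping.lookup (f+g) a) * mon x a)"
    by (rule evalc_superset) (use assms keys_add[of f g] in auto)
  also have "\<dots> = (\<Sum>a\<in>?S. h (Poly_Mapping.lookup f a) * mon x a) + (\<Sum>a\<in>?S. h (Poly_Mapping.lookup g a) * mon x a)"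
    by (simp add: lookup_add rhom_add[OF assms] distrib_right sum.distrib)
  also have "\<dots> = evalc h f x + evalc h g x"
    using evalc_superset[OF assms, of ?S] by auto
  finally show ?thesis .
qed

lemma evalc_zero: "rhom h \<Longrightarrow> evalc h 0 x = 0"
  by (simp add: evalc_def)

lemma evalc_sum: "rhom h \<Longrightarrow> evalc h (sum f A) x = (\<Sum>i\<in>A. evalc h (f i) x)"
  by (induction A rule: infinite_finite_induct) (auto simp: evalc_zero evalc_add)

lemma evalc_single: "rhom h \<Longrightarrow> evalc h (Poly_Mapping.single a c) x = h c * mon x a"
  by (simp add: evalc_def rhom_0)

lemma poly_mapping_sum_singles:
  "f = (\<Sum>a\<in>Poly_Mapping.keys f. Poly_Mapping.single a (Poly_Mapping.lookup f a))"
proof (rule poly_mapping_eqI)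
  fix b
  show "Poly_Mapping.lookup f b = Poly_Mapping.lookup (\<Sum>a\<in>Poly_Mapping.keys f. Poly_Mapping.single a (Poly_Mapping.lookup f a)) b"
    by (simp add: lookup_sum lookup_single when_def in_keys_iff)
qed

lemma evalc_mult:
  assumes h: "rhom h"
  shows "evalc h (f * g) x = evalc h f x * evalc h g x"
proof -
  let ?sf = "\<lambda>a. Poly_Mapping.single a (Poly_Mapping.lookup f a)"
  let ?sg = "\<lambda>b. Poly_Mapping.single b (Poly_Mapping.lookup g b)"
  have "f * g = (\<Sum>a\<in>Poly_Mapping.keys f. ?sf a) * (\<Sum>b\<in>Poly_Mapping.keys g. ?sg b)"
    using poly_mapping_sum_singles[of f] poly_mapping_sum_singles[of g] by simp
  also have "\<dots> = (\<Sum>a\<in>Poly_Mapping.keys f. \<Sum>b\<in>Poly_Mapping.keys g. ?sf a * ?sg b)"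
    by (simp add: sum_product)
  finally have fg: "f * g = \<dots>" .
  have "evalc h (f * g) x = (\<Sum>a\<in>Poly_Mapping.keys f. \<Sum>b\<in>Poly_Mapping.keys g. evalc h (?sf a * ?sg b) x)"
    unfolding fg by (simp add: evalc_sum[OF h])
  also have "\<dots> = (\<Sum>a\<in>Poly_Mapping.keys f. \<Sum>b\<in>Poly_Mapping.keys g.
      (h (Poly_Mapping.lookup f a) * mon x a) * (h (Poly_Mapping.lookup g b) * mon x b))"
    by (simp add: mult_single evalc_single[OF h] rhom_mult[OF h] mon_add mult_ac)
  also have "\<dots> = evalc h f x * evalc h g x"
    by (simp add: evalc_def sum_product)
  finally show ?thesis .
qed

lemma evalc_one: "rhom h \<Longrightarrow> evalc h 1 x = 1"
  using evalc_single[of h 0 1 x] by (simp add: rhom_1 mon_0)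

lemma rhom_evalc: "rhom h \<Longrightarrow> rhom (\<lambda>f. evalc h f x)"
  by (simp add: rhom_def evalc_one evalc_add evalc_mult)

lemma rhom_evalc_comp:
  assumes "rhom \<phi>"
  shows "\<phi> (evalc h f x) = evalc (\<lambda>c. \<phi> (h c)) f (\<lambda>i. \<phi> (x i))"
  by (simp add: evalc_def mon_def rhom_sum[OF assms] rhom_mult[OF assms] rhom_prod[OF assms] rhom_power[OF assms])


lemma ideal_pow_0: "f \<in> ideal_pow P 0"
  using ideal_pow.gen[of 0 "\<lambda>_. 0" P f] by simp

lemma ideal_pow_Suc_sub: "f \<in> ideal_pow P (Suc k) \<Longrightarrow> f \<in> ideal_pow P k"
proof (induction rule: ideal_pow.induct)
  case zero then show ?case by (rule ideal_pow.zero)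
next
  case (add f g) then show ?case by (blast intro: ideal_pow.add)
next
  case (gen q h)
  have "(h * q k) * (\<Prod>i<k. q i) \<in> ideal_pow P k"
    by (rule ideal_pow.gen) (use gen in auto)
  then show ?case by (simp add: mult_ac)
qed

lemma ideal_pow_mono: "l \<le> k \<Longrightarrow> f \<in> ideal_pow P k \<Longrightarrow> f \<in> ideal_pow P l"
  by (induction k rule: dec_induct) (auto intro: ideal_pow_Suc_sub)

lemma prod_lessThan_add: "(\<Prod>i<a+b. r i) = (\<Prod>i<a. r i) * (\<Prod>i<b. r (a+i))"
  for r :: "nat \<Rightarrow> 'a::comm_monoid_mult"
  by (induction b) (simp_all add: mult_ac)

lemma ideal_pow_gen_mult:
  assumes "\<forall>i<a. q i \<in> max_ideal P" "\<forall>i<b. q' i \<in> max_ideal P"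
  shows "(h * (\<Prod>i<a. q i)) * (h' * (\<Prod>i<b. q' i)) \<in> ideal_pow P (a + b)"
proof -
  define r where "r i = (if i < a then q i else q' (i - a))" for i
  have "(h * h') * (\<Prod>i<a+b. r i) \<in> ideal_pow P (a + b)"
    by (rule ideal_pow.gen) (use assms in \<open>auto simp: r_def\<close>)
  moreover have "(\<Prod>i<a+b. r i) = (\<Prod>i<a. q i) * (\<Prod>i<b. q' i)"
    unfolding prod_lessThan_add by (simp add: r_def)
  ultimately show ?thesis by (simp add: mult_ac)
qed

lemma ideal_pow_mult:
  assumes "f \<in> ideal_pow P a" "g \<in> ideal_pow P b"
  shows "f * g \<in> ideal_pow P (a + b)"
  using assms(1)
proof (induction rule: ideal_pow.induct)
  case zero then show ?case by (simp add: ideal_pow.zero)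
next
  case (add f1 f2) then show ?case by (simp add: distrib_right ideal_pow.add)
next
  case (gen q h)
  from assms(2) show ?case
  proof (induction rule: ideal_pow.induct)
    case zero then show ?case by (simp add: ideal_pow.zero)
  next
    case (add g1 g2) then show ?case by (simp add: distrib_left ideal_pow.add)
  next
    case (gen q' h')
    then show ?case using ideal_pow_gen_mult[of a q P b q' h h'] \<open>\<forall>i<a. q i \<in> max_ideal P\<close> by simp
  qed
qed

lemma ideal_pow_sum: "(\<And>i. i \<in> A \<Longrightarrow> f i \<in> ideal_pow P k) \<Longrightarrow> sum f A \<in> ideal_pow P k"
  by (induction A rule: infinite_finite_induct) (auto intro: ideal_pow.zero ideal_pow.add)

lemma ideal_pow_prod: "(\<And>i. i \<in> A \<Longrightarrow> f i \<in> ideal_pow P (n i)) \<Longrightarrow> prod f A \<in> ideal_pow P (sum n A)"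
proof (induction A rule: infinite_finite_induct)
  case (infinite A) then show ?case by (simp add: ideal_pow_0)
next
  case empty then show ?case by (simp add: ideal_pow_0)
next
  case (insert x F) then show ?case by (simp add: ideal_pow_mult)
qed

lemma ideal_pow_power: "L \<in> max_ideal P \<Longrightarrow> L ^ n \<in> ideal_pow P n"
proof -
  assume "L \<in> max_ideal P"
  then have "1 * (\<Prod>i<n. L) \<in> ideal_pow P n" by (intro ideal_pow.gen) simp
  then show ?thesis by simp
qed

lemma ideal_pow_lmult: "g \<in> ideal_pow P k \<Longrightarrow> f * g \<in> ideal_pow P k"
  using ideal_pow_mult[OF ideal_pow_0, of g P k f] by simp

lemma mdeg_add: "mdeg (a + b) = mdeg a + mdeg b"
  by (simp add: mdeg_def lookup_add sum.distrib)

lemma mdeg_0_iff: "mdeg a = 0 \<longleftrightarrow> a = 0"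
proof
  assume "mdeg a = 0"
  then have "\<forall>i. Poly_Mapping.lookup a i = 0" by (simp add: mdeg_def)
  then show "a = 0" by (intro poly_mapping_eqI) simp
qed (simp add: mdeg_def)

lemma homogeneous_mult:
  assumes "homogeneous d f" "homogeneous e g" shows "homogeneous (d + e) (f * g)"
  using assms keys_mult[of f g] unfolding homogeneous_def by (auto simp: mdeg_add)

lemma lookup_hcomp: "Poly_Mapping.lookup (hcomp d f) a = (if mdeg a = d then Poly_Mapping.lookup f a else 0)"
proof -
  have "{b. (if mdeg b = d then Poly_Mapping.lookup f b else 0) \<noteq> 0} \<subseteq> Poly_Mapping.keys f"
    by (smt (verit) in_keys_iff mem_Collect_eq subsetI)
  then have "finite {b. (if mdeg b = d then Poly_Mapping.lookup f b else 0) \<noteq> 0}"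
    by (rule finite_subset) simp
  then show ?thesis unfolding hcomp_def by (simp only: lookup_Abs_poly_mapping)
qed

lemma keys_hcomp: "Poly_Mapping.keys (hcomp d f) = {a\<in>Poly_Mapping.keys f. mdeg a = d}"
  by (rule set_eqI) (simp add: in_keys_iff lookup_hcomp)

lemma eval3_hcomp: "eval3 (hcomp d f) x = (\<Sum>a\<in>{a\<in>Poly_Mapping.keys f. mdeg a = d}. Poly_Mapping.lookup f a * mon x a)"
  unfolding eval3_evalc evalc_def keys_hcomp
  by (rule sum.cong) (simp_all add: lookup_hcomp)

lemma max_ideal_lookup0: "q \<in> max_ideal P \<Longrightarrow> Poly_Mapping.lookup q 0 = 0"
proof -
  assume "q \<in> max_ideal P"
  then have "eval3 (hcomp 0 q) P = 0" by (simp add: max_ideal_def)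
  moreover have "{a\<in>Poly_Mapping.keys q. mdeg a = 0} = (if 0 \<in> Poly_Mapping.keys q then {0} else {})"
    by (auto simp: mdeg_0_iff)
  ultimately show ?thesis by (auto simp: eval3_hcomp mon_0 split: if_splits simp: in_keys_iff)
qed

lemma max_ideal_keys: "q \<in> max_ideal P \<Longrightarrow> a \<in> Poly_Mapping.keys q \<Longrightarrow> 1 \<le> mdeg a"
  using max_ideal_lookup0[of q P] mdeg_0_iff[of a] by (cases "mdeg a") (auto simp: in_keys_iff)

lemma keys_prod_mdeg: "(\<And>i. i < k \<Longrightarrow> q i \<in> max_ideal P) \<Longrightarrow> a \<in> Poly_Mapping.keys (\<Prod>i<k. q i) \<Longrightarrow> k \<le> mdeg a"
proof (induction k arbitrary: a)
  case 0 then show ?case by simp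
next
  case (Suc k)
  from Suc.prems(2) keys_mult[of "\<Prod>i<k. q i" "q k"] obtain b c where
    "a = b + c" "b \<in> Poly_Mapping.keys (\<Prod>i<k. q i)" "c \<in> Poly_Mapping.keys (q k)" by auto
  with Suc.IH[of b] Suc.prems(1) max_ideal_keys[of "q k" P c] show ?case by (auto simp: mdeg_add)
qed

lemma ideal_pow_keys: "f \<in> ideal_pow P k \<Longrightarrow> a \<in> Poly_Mapping.keys f \<Longrightarrow> k \<le> mdeg a"
proof (induction arbitrary: a rule: ideal_pow.induct)
  case zero then show ?case by simp
next
  case (add f g) then show ?case using keys_add[of f g] by auto
next
  case (gen q h)
  from gen.prems keys_mult[of h "\<Prod>i<k. q i"] obtain b c where
    "a = b + c" "c \<in> Poly_Mapping.keys (\<Prod>i<k. q i)" by auto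
  with keys_prod_mdeg[of k q P c] gen.hyps show ?case by (auto simp: mdeg_add)
qed

lemma ideal_pow_bound: "f \<in> ideal_pow P k \<Longrightarrow> f \<noteq> 0 \<Longrightarrow> homogeneous d f \<Longrightarrow> k \<le> d"
proof -
  assume a: "f \<in> ideal_pow P k" "f \<noteq> 0" "homogeneous d f"
  then obtain b where "b \<in> Poly_Mapping.keys f" by (metis all_not_in_conv keys_eq_empty)
  with a ideal_pow_keys[of f P k b] show ?thesis by (auto simp: homogeneous_def)
qed

lemma ord_at_mem:
  assumes "f \<noteq> 0" "homogeneous d f"
  shows "f \<in> ideal_pow P (ord_at P f)" and "f \<in> ideal_pow P k \<Longrightarrow> k \<le> ord_at P f"
proof -
  show "f \<in> ideal_pow P (ord_at P f)" unfolding ord_at_def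
    by (rule GreatestI_nat[of _ 0 d]) (use assms ideal_pow_bound ideal_pow_0 in auto)
  show "f \<in> ideal_pow P k \<Longrightarrow> k \<le> ord_at P f" unfolding ord_at_def
    by (rule Greatest_le_nat[of _ _ d]) (use assms ideal_pow_bound in auto)
qed


definition Xv :: "3 \<Rightarrow> 'a::comm_ring_1 poly3" where
  "Xv i = Poly_Mapping.single (Poly_Mapping.single i 1) 1"

definition cst :: "'a::comm_ring_1 \<Rightarrow> 'a poly3" where
  "cst c = Poly_Mapping.single 0 c"

lemma rhom_cst: "rhom cst"
  by (simp add: rhom_def cst_def single_add mult_single)

lemma Xv_power: "Xv i ^ n = Poly_Mapping.single (Poly_Mapping.single i n) 1"
proof (induction n)
  case 0 then show ?case by simp
next
  case (Suc n) then show ?case by (simp add: Xv_def mult_single single_add[symmetric])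
qed

lemma prod_singles: "(\<Prod>i\<in>A. Poly_Mapping.single (g i) (1::'a::comm_ring_1)) = Poly_Mapping.single (\<Sum>i\<in>A. g i) 1"
  by (induction A rule: infinite_finite_induct) (simp_all add: mult_single)

lemma sum_singles_lookup: "(\<Sum>i\<in>(UNIV::3 set). Poly_Mapping.single i (Poly_Mapping.lookup a i)) = a"
  by (rule poly_mapping_eqI) (simp add: lookup_sum lookup_single when_def)

lemma mon_Xv: "mon Xv a = Poly_Mapping.single a 1"
  by (simp add: mon_def Xv_power prod_singles sum_singles_lookup)

lemma mon_single1: "mon x (Poly_Mapping.single i 1) = x i"
proof -
  have "mon x (Poly_Mapping.single i 1) = (\<Prod>k\<in>UNIV. if k = i then x i else 1)"
    unfolding mon_def by (rule prod.cong) (auto simp: lookup_single when_def)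
  also have "\<dots> = x i" by (simp add: prod.delta)
  finally show ?thesis .
qed

lemma evalc_cst_Xv: "evalc cst f Xv = f"
proof -
  have "evalc cst f Xv = (\<Sum>a\<in>Poly_Mapping.keys f. Poly_Mapping.single a (Poly_Mapping.lookup f a))"
    unfolding evalc_def mon_Xv cst_def by (simp add: mult_single)
  then show ?thesis using poly_mapping_sum_singles[of f] by simp
qed

lemma evalc_cst: "rhom h \<Longrightarrow> evalc h (cst c) x = h c"
  by (simp add: cst_def evalc_single mon_0)

lemma evalc_Xv: "rhom h \<Longrightarrow> evalc h (Xv i) x = x i"
  using mon_single1[of x i] by (simp add: Xv_def evalc_single rhom_1)

definition sig :: "(3 \<Rightarrow> 'k::field) \<Rightarrow> 3 \<Rightarrow> 3 \<Rightarrow> 'k poly3" where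
  "sig P j i = (if i = j then Xv i else Xv i + cst (P i / P j) * Xv j)"

definition sig' :: "(3 \<Rightarrow> 'k::field) \<Rightarrow> 3 \<Rightarrow> 3 \<Rightarrow> 'k poly3" where
  "sig' P j i = (if i = j then Xv i else Xv i - cst (P i / P j) * Xv j)"

definition Sm :: "(3 \<Rightarrow> 'k::field) \<Rightarrow> 3 \<Rightarrow> 'k poly3 \<Rightarrow> 'k poly3" where
  "Sm P j f = evalc cst f (sig P j)"

definition Sm' :: "(3 \<Rightarrow> 'k::field) \<Rightarrow> 3 \<Rightarrow> 'k poly3 \<Rightarrow> 'k poly3" where
  "Sm' P j f = evalc cst f (sig' P j)"

lemma Sm'_Sm: "Sm' P j (Sm P j f) = f"
proof -
  have h: "rhom (Sm' P j)" unfolding Sm'_def[abs_def] by (rule rhom_evalc[OF rhom_cst])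
  have "Sm' P j (Sm P j f) = evalc (\<lambda>c. Sm' P j (cst c)) f (\<lambda>i. Sm' P j (sig P j i))"
    unfolding Sm_def by (rule rhom_evalc_comp[OF h])
  also have "(\<lambda>c. Sm' P j (cst c)) = cst"
    by (simp add: Sm'_def evalc_cst rhom_cst)
  also have "(\<lambda>i. Sm' P j (sig P j i)) = Xv"
    by (auto simp: fun_eq_iff sig_def Sm'_def evalc_add evalc_mult evalc_cst evalc_Xv rhom_cst sig'_def)
  finally show ?thesis by (simp add: evalc_cst_Xv)
qed

definition om :: "3 \<Rightarrow> mono3 \<Rightarrow> nat" where
  "om j a = (\<Sum>i\<in>UNIV. if i = j then 0 else Poly_Mapping.lookup a i)"

lemma Sm'_mem:
  assumes "P j \<noteq> 0" "\<And>i. i \<noteq> j \<Longrightarrow> sig' P j i \<in> max_ideal P"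
    and "\<forall>a\<in>Poly_Mapping.keys g. k \<le> om j a"
  shows "Sm' P j g \<in> ideal_pow P k"
  unfolding Sm'_def evalc_def
proof (rule ideal_pow_sum)
  fix a assume a: "a \<in> Poly_Mapping.keys g"
  have "mon (sig' P j) a \<in> ideal_pow P (\<Sum>i\<in>UNIV. if i = j then 0 else Poly_Mapping.lookup a i)"
    unfolding mon_def
    by (rule ideal_pow_prod) (auto simp: ideal_pow_0 intro: ideal_pow_power assms(2))
  then have "mon (sig' P j) a \<in> ideal_pow P k"
    using assms(3) a by (auto simp: om_def intro: ideal_pow_mono)
  then show "cst (Poly_Mapping.lookup g a) * mon (sig' P j) a \<in> ideal_pow P k"
    by (rule ideal_pow_lmult)
qed


lemma mdeg_single: "mdeg (Poly_Mapping.single i n) = n"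
proof -
  have "mdeg (Poly_Mapping.single i n) = (\<Sum>k\<in>UNIV. if i = k then n else 0)"
    unfolding mdeg_def by (rule sum.cong) (auto simp: lookup_single when_def)
  then show ?thesis by simp
qed

lemma hcomp_homog: "homogeneous e f \<Longrightarrow> hcomp d f = (if d = e then f else 0)"
  by (rule poly_mapping_eqI) (auto simp: lookup_hcomp homogeneous_def in_keys_iff)

lemma evalc_diff: "rhom h \<Longrightarrow> evalc h (f - g) x = evalc h f x - evalc h g x"
  using rhom_diff[OF rhom_evalc[of h x], of f g] by simp

lemma sig'_max:
  assumes "P j \<noteq> 0" "i \<noteq> j"
  shows "sig' P j i \<in> max_ideal P"
proof -
  let ?c = "P i / P j"
  have eq: "sig' P j i = Poly_Mapping.single (Poly_Mapping.single i 1) 1 + Poly_Mapping.single (Poly_Mapping.single j 1) (- ?c)"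
    using assms by (simp add: sig'_def Xv_def cst_def mult_single single_uminus)
  have hom: "homogeneous 1 (sig' P j i)"
    unfolding homogeneous_def
  proof
    fix a assume "a \<in> Poly_Mapping.keys (sig' P j i)"
    then have "a \<in> Poly_Mapping.keys (Poly_Mapping.single (Poly_Mapping.single i 1) (1::'a)) \<union> Poly_Mapping.keys (Poly_Mapping.single (Poly_Mapping.single j 1) (- ?c))"
      unfolding eq using keys_add[of "Poly_Mapping.single (Poly_Mapping.single i 1) (1::'a)" "Poly_Mapping.single (Poly_Mapping.single j 1) (- ?c)"] by blast
    then have "a = Poly_Mapping.single i 1 \<or> a = Poly_Mapping.single j 1"
      by (cases "?c = 0") auto
    then show "mdeg a = 1" by (auto simp: mdeg_single)
  qed
  have ev: "eval3 (sig' P j i) P = 0"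
    using assms by (simp add: eval3_evalc sig'_def evalc_diff evalc_mult rhom_id evalc_Xv evalc_cst)
  show ?thesis unfolding max_ideal_def
    using hom ev by (auto simp: hcomp_homog eval3_evalc evalc_zero rhom_id)
qed


definition Ex :: "3 \<Rightarrow> 3 \<Rightarrow> 'a::comm_ring_1 poly3 poly" where
  "Ex j i = monom (Xv i) (if i = j then 0 else 1)"

definition Em :: "3 \<Rightarrow> 'a::comm_ring_1 poly3 \<Rightarrow> 'a poly3 poly" where
  "Em j g = evalc (\<lambda>c. [:cst c:]) g (Ex j)"

lemma rhom_pcst: "rhom (\<lambda>c. [:cst c:])"
  using rhom_cst by (simp add: rhom_def one_pCons mult.commute)

lemma rhom_Em: "rhom (Em j)"
  unfolding Em_def[abs_def] by (rule rhom_evalc[OF rhom_pcst])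

lemma prod_monom: "(\<Prod>i\<in>A. monom (f i) (g i)) = monom (\<Prod>i\<in>A. f i) (\<Sum>i\<in>A. g i)"
  by (induction A rule: infinite_finite_induct) (simp_all add: mult_monom)

lemma mon_Ex: "mon (Ex j) a = monom (Poly_Mapping.single a 1) (om j a)"
proof -
  have "mon (Ex j) a = (\<Prod>i\<in>UNIV. monom (Xv i ^ Poly_Mapping.lookup a i) ((if i = j then 0 else 1) * Poly_Mapping.lookup a i))"
    unfolding mon_def Ex_def by (simp add: monom_power)
  also have "\<dots> = monom (mon Xv a) (om j a)"
    unfolding prod_monom mon_def om_def by (intro arg_cong2[where f=monom] refl sum.cong) auto
  finally show ?thesis by (simp add: mon_Xv)
qed

lemma Em_expand: "Em j g = (\<Sum>a\<in>Poly_Mapping.keys g. monom (Poly_Mapping.single a (Poly_Mapping.lookup g a)) (om j a))"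
  unfolding Em_def evalc_def mon_Ex
  by (rule sum.cong) (simp_all add: smult_monom cst_def mult_single)

lemma lookup_coeff_Em:
  "Poly_Mapping.lookup (coeff (Em j g) l) b = (if om j b = l then Poly_Mapping.lookup g b else 0)"
proof -
  have "Poly_Mapping.lookup (coeff (Em j g) l) b =
     (\<Sum>a\<in>Poly_Mapping.keys g. if a = b then (if om j a = l then Poly_Mapping.lookup g a else 0) else 0)"
    unfolding Em_expand coeff_sum lookup_sum
    by (rule sum.cong) (auto simp: coeff_monom lookup_single when_def)
  also have "\<dots> = (if om j b = l then Poly_Mapping.lookup g b else 0)"
    by (simp add: sum.delta in_keys_iff)
  finally show ?thesis .
qed

lemma coeff_dvd_X_pow: "[:0, 1:] ^ k dvd p \<Longrightarrow> l < k \<Longrightarrow> coeff p l = 0"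
  by (auto elim!: dvdE simp: monom_altdef[of 1 k, simplified, symmetric] coeff_monom_mult)

lemma Em_dvd:
  assumes "[:0, 1:] ^ k dvd Em j g" "a \<in> Poly_Mapping.keys g"
  shows "k \<le> om j a"
proof (rule ccontr)
  assume "\<not> k \<le> om j a"
  then have "coeff (Em j g) (om j a) = 0" using coeff_dvd_X_pow[OF assms(1)] by simp
  then have "Poly_Mapping.lookup (coeff (Em j g) (om j a)) a = 0" by simp
  then show False using assms(2) by (simp add: lookup_coeff_Em in_keys_iff)
qed

lemma Em_nonzero:
  assumes "g \<noteq> 0" shows "Em j g \<noteq> 0"
proof
  assume "Em j g = 0"
  from assms obtain a where a: "a \<in> Poly_Mapping.keys g" by (metis all_not_in_conv keys_eq_empty)
  have "Poly_Mapping.lookup (coeff (Em j g) (om j a)) a = 0" using \<open>Em j g = 0\<close> by simp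
  then show False using a by (simp add: lookup_coeff_Em in_keys_iff)
qed


lemma mon_scale: "mon (\<lambda>i. c * x i) a = c ^ mdeg a * mon x a"
  by (simp add: mon_def mdeg_def power_mult_distrib prod.distrib power_sum)

lemma vanish:
  fixes P :: "3 \<Rightarrow> 'k::field"
  assumes q: "q \<in> max_ideal P" and Pj: "P j \<noteq> 0"
  shows "evalc cst q (\<lambda>i. cst (P i / P j) * Y) = 0"
proof -
  let ?v = "\<lambda>i. P i / P j"
  have mon_eq: "mon (\<lambda>i. cst (?v i) * Y) a = cst (mon ?v a) * Y ^ mdeg a" for a
    by (simp add: mon_def mdeg_def power_mult_distrib prod.distrib power_sum
        rhom_prod[OF rhom_cst] rhom_power[OF rhom_cst])
  have hz: "(\<Sum>a\<in>{a\<in>Poly_Mapping.keys q. mdeg a = d}. Poly_Mapping.lookup q a * mon ?v a) = 0" for d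
  proof -
    have v: "?v = (\<lambda>i. inverse (P j) * P i)" by (simp add: field_simps fun_eq_iff)
    have "(\<Sum>a\<in>{a\<in>Poly_Mapping.keys q. mdeg a = d}. Poly_Mapping.lookup q a * mon ?v a)
        = (\<Sum>a\<in>{a\<in>Poly_Mapping.keys q. mdeg a = d}. inverse (P j) ^ d * (Poly_Mapping.lookup q a * mon P a))"
      unfolding v mon_scale by (rule sum.cong) (auto simp: mult_ac)
    also have "\<dots> = inverse (P j) ^ d * eval3 (hcomp d q) P"
      by (simp add: eval3_hcomp sum_distrib_left)
    also have "\<dots> = 0" using q by (simp add: max_ideal_def)
    finally show ?thesis .
  qed
  have "evalc cst q (\<lambda>i. cst (?v i) * Y) = (\<Sum>a\<in>Poly_Mapping.keys q. cst (Poly_Mapping.lookup q a * mon ?v a) * Y ^ mdeg a)"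
    unfolding evalc_def mon_eq by (simp add: rhom_mult[OF rhom_cst] mult_ac)
  also have "\<dots> = (\<Sum>d\<in>mdeg ` Poly_Mapping.keys q. \<Sum>a\<in>{a\<in>Poly_Mapping.keys q. mdeg a = d}. cst (Poly_Mapping.lookup q a * mon ?v a) * Y ^ mdeg a)"
    by (rule sum.image_gen) simp
  also have "\<dots> = (\<Sum>d\<in>mdeg ` Poly_Mapping.keys q. \<Sum>a\<in>{a\<in>Poly_Mapping.keys q. mdeg a = d}. cst (Poly_Mapping.lookup q a * mon ?v a) * Y ^ d)"
    by (intro sum.cong refl) auto
  also have "\<dots> = (\<Sum>d\<in>mdeg ` Poly_Mapping.keys q. cst (\<Sum>a\<in>{a\<in>Poly_Mapping.keys q. mdeg a = d}. Poly_Mapping.lookup q a * mon ?v a) * Y ^ d)"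
    by (simp add: sum_distrib_right rhom_sum[OF rhom_cst])
  also have "\<dots> = 0" by (simp add: hz rhom_0[OF rhom_cst])
  finally show ?thesis .
qed

lemma rhom_coeff0: "rhom (\<lambda>p. coeff p 0)"
  by (simp add: rhom_def coeff_mult_0)

lemma rhom_Phi: "rhom (\<lambda>f. Em j (Sm P j f))"
  unfolding Sm_def by (rule rhom_comp[OF rhom_evalc[OF rhom_cst] rhom_Em])

lemma V1:
  fixes P :: "3 \<Rightarrow> 'k::field"
  assumes q: "q \<in> max_ideal P" and Pj: "P j \<noteq> 0"
  shows "[:0, 1:] dvd Em j (Sm P j q)"
proof -
  have h: "rhom (\<lambda>f. coeff (Em j f) 0)" by (rule rhom_comp[OF rhom_Em rhom_coeff0])
  have "coeff (Em j (Sm P j q)) 0 = evalc (\<lambda>c. coeff (Em j (cst c)) 0) q (\<lambda>i. coeff (Em j (sig P j i)) 0)"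
    unfolding Sm_def by (rule rhom_evalc_comp[OF h])
  also have "(\<lambda>c. coeff (Em j (cst c)) 0) = cst"
    by (simp add: fun_eq_iff Em_def evalc_cst rhom_pcst)
  also have "(\<lambda>i. coeff (Em j (sig P j i)) 0) = (\<lambda>i. cst (P i / P j) * Xv j)"
  proof
    fix i
    have c1: "cst (1::'k) = 1" by (simp add: cst_def)
    show "coeff (Em j (sig P j i)) 0 = cst (P i / P j) * Xv j"
      using Pj by (cases "i = j") (simp_all add: sig_def Em_def evalc_add evalc_mult evalc_cst evalc_Xv
        rhom_pcst Ex_def coeff_mult_0 coeff_monom c1)
  qed
  also have "evalc cst q \<dots> = 0" by (rule vanish[OF q Pj])
  finally show ?thesis by (simp add: dvd_iff_poly_eq_0[of 0, simplified] poly_0_coeff_0)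
qed

lemma V2:
  fixes P :: "3 \<Rightarrow> 'k::field"
  assumes "f \<in> ideal_pow P k" and Pj: "P j \<noteq> 0"
  shows "[:0, 1:] ^ k dvd Em j (Sm P j f)"
  using assms(1)
proof (induction rule: ideal_pow.induct)
  case zero then show ?case by (simp add: rhom_0[OF rhom_Phi])
next
  case (add f g) then show ?case by (simp add: rhom_add[OF rhom_Phi])
next
  case (gen q h)
  have "(\<Prod>i<k. [:0, 1:]) dvd (\<Prod>i<k. Em j (Sm P j (q i)))"
    by (rule prod_dvd_prod) (use gen V1 Pj in auto)
  then show ?case
    by (simp add: rhom_mult[OF rhom_Phi] rhom_prod[OF rhom_Phi])
qed

lemma ord_sum_ge:
  fixes P :: "3 \<Rightarrow> 'k::field"
  assumes P0: "P \<noteq> (\<lambda>_. 0)" and F1: "F1 \<noteq> 0" "homogeneous d1 F1"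
    and F2: "F2 \<noteq> 0" "homogeneous d2 F2" and m: "F1 * F2 \<in> ideal_pow P m"
  shows "m \<le> ord_at P F1 + ord_at P F2"
proof -
  from P0 obtain j where Pj: "P j \<noteq> 0" by auto
  let ?\<Phi> = "\<lambda>f. Em j (Sm P j f)"
  have nz: "?\<Phi> F \<noteq> 0" if "F \<noteq> 0" for F
  proof -
    have "Sm P j F \<noteq> 0" using that Sm'_Sm[of P j F] by (auto simp: Sm'_def evalc_zero rhom_cst)
    then show ?thesis by (rule Em_nonzero)
  qed
  have le: "order 0 (?\<Phi> F) \<le> ord_at P F" if "F \<noteq> 0" "homogeneous d F" for F d
  proof -
    have "[:0, 1:] ^ order 0 (?\<Phi> F) dvd ?\<Phi> F" using order_1[of 0 "?\<Phi> F"] by simp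
    then have "\<forall>a\<in>Poly_Mapping.keys (Sm P j F). order 0 (?\<Phi> F) \<le> om j a"
      using Em_dvd by blast
    then have "Sm' P j (Sm P j F) \<in> ideal_pow P (order 0 (?\<Phi> F))"
      by (intro Sm'_mem Pj sig'_max)
    then have "F \<in> ideal_pow P (order 0 (?\<Phi> F))" by (simp add: Sm'_Sm)
    then show ?thesis using ord_at_mem(2)[OF that] by blast
  qed
  have "[:0, 1:] ^ m dvd ?\<Phi> F1 * ?\<Phi> F2"
    using V2[OF m Pj] by (simp add: rhom_mult[OF rhom_Phi])
  moreover have "?\<Phi> F1 * ?\<Phi> F2 \<noteq> 0" using nz F1 F2 by simp
  ultimately have "m \<le> order 0 (?\<Phi> F1 * ?\<Phi> F2)"
    using order_divides[of 0 m "?\<Phi> F1 * ?\<Phi> F2"] by simp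
  also have "\<dots> = order 0 (?\<Phi> F1) + order 0 (?\<Phi> F2)"
    by (rule order_mult) (use nz F1 F2 in simp)
  also have "\<dots> \<le> ord_at P F1 + ord_at P F2"
    using le[OF F1] le[OF F2] by simp
  finally show ?thesis .
qed


lemma init_deg_le: "f \<in> J \<Longrightarrow> f \<noteq> 0 \<Longrightarrow> homogeneous d f \<Longrightarrow> init_deg J \<le> d"
  unfolding init_deg_def by (rule Least_le) blast

lemma init_deg_ex: "f \<in> J \<Longrightarrow> f \<noteq> 0 \<Longrightarrow> homogeneous d f \<Longrightarrow> \<exists>g\<in>J. g \<noteq> 0 \<and> homogeneous (init_deg J) g"
  unfolding init_deg_def by (rule LeastI_ex) blast

lemma main_one:
  fixes Z :: "(3 \<Rightarrow> 'k::field) set"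
  assumes Z0: "\<forall>P\<in>Z. P \<noteq> (\<lambda>_. 0)" and nm: "n < m"
    and F1: "F1 \<noteq> 0" "homogeneous d1 F1"
    and F2: "F2 \<noteq> 0" "homogeneous d2 F2"
    and prod: "F1 * F2 \<in> fat_ideal Z (\<lambda>_. m)"
    and deg: "d1 + d2 = init_deg (fat_ideal Z (\<lambda>_. m))"
  shows "d1 = init_deg (fat_ideal Z (\<lambda>P. ord_at P F1)) \<and>
           int (init_deg (fat_ideal Z (\<lambda>P. ord_at P F1)))
             - int (init_deg (fat_ideal Z (\<lambda>P. ord_at P F1 - (m - n))))
           \<le> int (init_deg (fat_ideal Z (\<lambda>_. m))) - int (init_deg (fat_ideal Z (\<lambda>_. n)))"
proof -
  have ordge: "m \<le> ord_at P F1 + ord_at P F2" if "P \<in> Z" for P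
    using ord_sum_ge[of P F1 d1 F2 d2 m] that Z0 F1 F2 prod by (auto simp: fat_ideal_def)
  have mem1: "F1 \<in> ideal_pow P (ord_at P F1)" for P using ord_at_mem(1)[OF F1] .
  have mem2: "F2 \<in> ideal_pow P (ord_at P F2)" for P using ord_at_mem(1)[OF F2] .
  let ?M1 = "fat_ideal Z (\<lambda>P. ord_at P F1)"
  have F1M1: "F1 \<in> ?M1" by (simp add: fat_ideal_def mem1)
  have le1: "init_deg ?M1 \<le> d1" by (rule init_deg_le[OF F1M1 F1])
  obtain D where D: "D \<in> ?M1" "D \<noteq> 0" "homogeneous (init_deg ?M1) D"
    using init_deg_ex[OF F1M1 F1] by blast
  have "D * F2 \<in> fat_ideal Z (\<lambda>_. m)"
    unfolding fat_ideal_def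
  proof (intro CollectI ballI)
    fix P assume P: "P \<in> Z"
    have "D * F2 \<in> ideal_pow P (ord_at P F1 + ord_at P F2)"
      using D(1) P mem2 by (intro ideal_pow_mult) (auto simp: fat_ideal_def)
    then show "D * F2 \<in> ideal_pow P m" using ordge[OF P] ideal_pow_mono by blast
  qed
  then have "init_deg (fat_ideal Z (\<lambda>_. m)) \<le> init_deg ?M1 + d2"
    by (rule init_deg_le) (use D F2 homogeneous_mult in auto)
  then have eq1: "d1 = init_deg ?M1" using le1 deg by simp
  let ?N1 = "fat_ideal Z (\<lambda>P. ord_at P F1 - (m - n))"
  have F1N1: "F1 \<in> ?N1" by (auto simp: fat_ideal_def intro: ideal_pow_mono[OF _ mem1])
  obtain G where G: "G \<in> ?N1" "G \<noteq> 0" "homogeneous (init_deg ?N1) G"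
    using init_deg_ex[OF F1N1 F1] by blast
  have "G * F2 \<in> fat_ideal Z (\<lambda>_. n)"
    unfolding fat_ideal_def
  proof (intro CollectI ballI)
    fix P assume P: "P \<in> Z"
    have "G * F2 \<in> ideal_pow P (ord_at P F1 - (m - n) + ord_at P F2)"
      using G(1) P mem2 by (intro ideal_pow_mult) (auto simp: fat_ideal_def)
    moreover have "n \<le> ord_at P F1 - (m - n) + ord_at P F2" using ordge[OF P] nm by linarith
    ultimately show "G * F2 \<in> ideal_pow P n" using ideal_pow_mono by blast
  qed
  then have "init_deg (fat_ideal Z (\<lambda>_. n)) \<le> init_deg ?N1 + d2"
    by (rule init_deg_le) (use G F2 homogeneous_mult in auto)
  then show ?thesis using eq1 deg by linarith
qed

theorem lemma2p1:
  fixes Z :: "(3 \<Rightarrow> 'k::field_char_0) set"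
    and m n :: nat
    and F1 F2 :: "'k poly3"
    and d1 d2 :: nat
  assumes "alg_closed_field TYPE('k)"
    and "finite Z"
    and "\<forall>P\<in>Z. P \<noteq> (\<lambda>_. 0)"
    and "\<forall>P\<in>Z. \<forall>Q\<in>Z. P \<noteq> Q \<longrightarrow> (\<forall>c. Q \<noteq> (\<lambda>i. c * P i))"
    and "0 < n" and "n < m"
    and "F1 \<noteq> 0" and "homogeneous d1 F1" and "0 < d1"
    and "F2 \<noteq> 0" and "homogeneous d2 F2" and "0 < d2"
    and "F1 * F2 \<in> fat_ideal Z (\<lambda>_. m)"
    and "d1 + d2 = init_deg (fat_ideal Z (\<lambda>_. m))"
  shows "\<forall>(G, d) \<in> {(F1, d1), (F2, d2)}.
           d = init_deg (fat_ideal Z (\<lambda>P. ord_at P G)) \<and>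
           int (init_deg (fat_ideal Z (\<lambda>P. ord_at P G)))
             - int (init_deg (fat_ideal Z (\<lambda>P. ord_at P G - (m - n))))
           \<le> int (init_deg (fat_ideal Z (\<lambda>_. m))) - int (init_deg (fat_ideal Z (\<lambda>_. n)))"
proof -
  have a: "F1 * F2 \<in> fat_ideal Z (\<lambda>_. m)" "F2 * F1 \<in> fat_ideal Z (\<lambda>_. m)"
    using assms(13) by (simp_all add: mult.commute)
  have b: "d2 + d1 = init_deg (fat_ideal Z (\<lambda>_. m))" using assms(14) by simp
  show ?thesis
    using main_one[OF assms(3) assms(6) assms(7) assms(8) assms(10) assms(11) a(1) assms(14)]
          main_one[OF assms(3) assms(6) assms(10) assms(11) assms(7) assms(8) a(2) b]
    by auto
qed

end
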